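(* Assume $a/b>\sqrt2$, $|u|<u_{\max}$ and $a^2+(u^2-2)c^2\ne0$. Let $\mathcal{C}^\dagger$ be the unit circle centered at the focus $f_1=(-c,0)$. The images of the four vertices $P_1,\dots,P_4$ of the self-intersected 4-periodic under inversion in $\mathcal{C}^\dagger$ are collinear and lie on the radical axis of $\mathcal{C}^\dagger$ and $\mathcal{C}$; likewise the images of the four vertices of its outer polygon under inversion in $\mathcal{C}^\dagger$ are collinear and lie on the radical axis of $\mathcal{C}^\dagger$ and $\mathcal{C}'$.
   Context: The elliptic billiard is $\mathcal{E}: x^2/a^2+y^2/b^2=1$, $a>b>0$, $c=\sqrt{a^2-b^2}$, foci $f_1=(-c,0)$, $f_2=(c,0)$. For $a/b>\sqrt2$ the self-intersected 4-periodics are parametrized by $u$, $|u|\le u_{\max}:=\frac{a}{c^2}\sqrt{a^2-2b^2}$, with vertices $P_1=(au,\,b\sqrt{1-u^2})$, $P_3=(-au,\,b\sqrt{1-u^2})$, $P_2=\left(-\frac{a\sqrt{a^2(a^2-2b^2)-c^4u^2}}{c^2\sqrt{1-u^2}},-\frac{b^3}{c^2\sqrt{1-u^2}}\right)$, $P_4=\left(\frac{a\sqrt{a^2(a^2-2b^2)-c^4u^2}}{c^2\sqrt{1-u^2}},-\frac{b^3}{c^2\sqrt{1-u^2}}\right)$. The outer polygon has vertices $P_i'$ = intersection of the tangent lines to $\mathcal{E}$ at $P_i$ and $P_{i+1}$ (indices mod 4). $\mathcal{C}$ is the circle with center $C=\left(0,\frac{c^2u^2-a^2+2b^2}{2b\sqrt{1-u^2}}\right)$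 and radius $R=\frac{a^2-c^2u^2}{2b\sqrt{1-u^2}}$; $\mathcal{C}'$ is the circle with center $C'=\left(0,-\frac{2bc^2\sqrt{1-u^2}}{a^2+(u^2-2)c^2}\right)$ and radius $\left|\frac{c(c^2u^2-a^2)}{a^2+(u^2-2)c^2}\right|$. Inversion in a circle of center $Z$ and radius $\rho$ sends $X\neq Z$ to $Z+\rho^2(X-Z)/|X-Z|^2$. *)

theory Defs
  imports "HOL-Analysis.Analysis"
begin

type_synonym pt = "real \<times> real"

definition focal_c :: "real \<Rightarrow> real \<Rightarrow> real" where
  "focal_c a b = sqrt (a^2 - b^2)"

definition u_max :: "real \<Rightarrow> real \<Rightarrow> real" where
  "u_max a b = a / (focal_c a b)^2 * sqrt (a^2 - 2*b^2)"

definition P1 :: "real \<Rightarrow> real \<Rightarrow> real \<Rightarrow> pt" where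
  "P1 a b u = (a*u, b * sqrt (1 - u^2))"
definition P3 :: "real \<Rightarrow> real \<Rightarrow> real \<Rightarrow> pt" where
  "P3 a b u = (-a*u, b * sqrt (1 - u^2))"
definition P2 :: "real \<Rightarrow> real \<Rightarrow> real \<Rightarrow> pt" where
  "P2 a b u = (let c = focal_c a b in
     (- (a * sqrt (a^2*(a^2 - 2*b^2) - c^4*u^2)) / (c^2 * sqrt (1 - u^2)),
      - (b^3) / (c^2 * sqrt (1 - u^2))))"
definition P4 :: "real \<Rightarrow> real \<Rightarrow> real \<Rightarrow> pt" where
  "P4 a b u = (let c = focal_c a b in
     ((a * sqrt (a^2*(a^2 - 2*b^2) - c^4*u^2)) / (c^2 * sqrt (1 - u^2)),
      - (b^3) / (c^2 * sqrt (1 - u^2))))"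

definition tangent_line :: "real \<Rightarrow> real \<Rightarrow> pt \<Rightarrow> pt set" where
  "tangent_line a b P = {X. fst X * fst P / a^2 + snd X * snd P / b^2 = 1}"

text \<open>Vertex of the outer polygon: intersection of tangents at P and Q.\<close>
definition tangent_meet :: "real \<Rightarrow> real \<Rightarrow> pt \<Rightarrow> pt \<Rightarrow> pt" where
  "tangent_meet a b P Q = (THE X. X \<in> tangent_line a b P \<and> X \<in> tangent_line a b Q)"

definition inversion :: "pt \<Rightarrow> real \<Rightarrow> pt \<Rightarrow> pt" where
  "inversion Z \<rho> X = Z + (\<rho>^2 / (norm (X - Z))^2) *\<^sub>R (X - Z)"

definition radical_axis :: "pt \<Rightarrow> real \<Rightarrow> pt \<Rightarrow> real \<Rightarrow> pt set" where
  "radical_axis Z1 r1 Z2 r2 = {X. (norm (X - Z1))^2 - r1^2 = (norm (X - Z2))^2 - r2^2}"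

definition circC_center :: "real \<Rightarrow> real \<Rightarrow> real \<Rightarrow> pt" where
  "circC_center a b u = (let c = focal_c a b in
     (0, (c^2*u^2 - a^2 + 2*b^2) / (2*b * sqrt (1 - u^2))))"
definition circC_radius :: "real \<Rightarrow> real \<Rightarrow> real \<Rightarrow> real" where
  "circC_radius a b u = (let c = focal_c a b in (a^2 - c^2*u^2) / (2*b * sqrt (1 - u^2)))"

definition circC'_center :: "real \<Rightarrow> real \<Rightarrow> real \<Rightarrow> pt" where
  "circC'_center a b u = (let c = focal_c a b in
     (0, - (2*b*c^2 * sqrt (1 - u^2)) / (a^2 + (u^2 - 2)*c^2)))"
definition circC'_radius :: "real \<Rightarrow> real \<Rightarrow> real \<Rightarrow> real" where
  "circC'_radius a b u = (let c = focal_c a b in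
     \<bar>c*(c^2*u^2 - a^2) / (a^2 + (u^2 - 2)*c^2)\<bar>)"

end

theory Submission
  imports Defs
begin

lemma normsq: "(norm (p::real\<times>real))^2 = (fst p)^2 + (snd p)^2"
  by (cases p) (simp add: norm_Pair)

lemma inv_radical:
  fixes f Z X :: "real\<times>real"
  assumes "norm (f - Z)^2 = R^2" "norm (X - Z)^2 = R^2" "X \<noteq> f"
  shows "inversion f 1 X \<in> radical_axis f 1 Z R"
proof -
  obtain f1 f2 where f: "f = (f1,f2)" by (cases f)
  obtain z1 z2 where z: "Z = (z1,z2)" by (cases Z)
  obtain x1 x2 where x: "X = (x1,x2)" by (cases X)
  define v1 where "v1 = x1 - f1"
  define v2 where "v2 = x2 - f2"
  define w1 where "w1 = z1 - f1"
  define w2 where "w2 = z2 - f2"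
  have n: "v1^2 + v2^2 \<noteq> 0" using assms(3) f x v1_def v2_def
    by (auto simp: sum_power2_eq_zero_iff)
  have h1: "w1^2+w2^2 = R^2" using assms(1) f z v1_def w1_def w2_def by (simp add: normsq power2_commute)
  have h2: "(v1-w1)^2+(v2-w2)^2 = R^2" using assms(2) f z x v1_def v2_def w1_def w2_def by (simp add: normsq)
  have h3: "v1^2+v2^2 = 2*(v1*w1+v2*w2)" using h1 h2 by (simp add: power2_eq_square algebra_simps)
  define q where "q = v1^2+v2^2"
  have qn: "q \<noteq> 0" using n q_def by simp
  have e1: "2*(v1/q*w1 + v2/q*w2) = 1"
  proof -
    have "2*(v1/q*w1 + v2/q*w2) = (2*(v1*w1+v2*w2))/q" by (simp add: add_divide_distrib)
    also have "... = 1" using h3 qn q_def by simp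
    finally show ?thesis .
  qed
  have key: "(v1/q)^2 + (v2/q)^2 - 1 = (v1/q - w1)^2 + (v2/q - w2)^2 - R^2"
  proof -
    have "(v1/q - w1)^2 + (v2/q - w2)^2 - R^2 = (v1/q)^2 + (v2/q)^2 - 2*(v1/q*w1 + v2/q*w2) + (w1^2+w2^2) - R^2"
      by (simp add: power2_diff)
    then show ?thesis using h1 e1 by simp
  qed
  have inv: "inversion f 1 X = (f1 + v1/q, f2 + v2/q)"
    unfolding inversion_def f x q_def v1_def v2_def by (simp add: normsq divide_inverse mult.commute)
  show ?thesis unfolding radical_axis_def inv using key unfolding f z
    by (simp add: normsq w1_def w2_def algebra_simps)
qed

lemma collinear_radical:
  fixes f Z :: "real\<times>real"
  assumes "Z \<noteq> f"
  shows "collinear (radical_axis f 1 Z R)"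
proof -
  obtain f1 f2 where f: "f = (f1,f2)" by (cases f)
  obtain z1 z2 where z: "Z = (z1,z2)" by (cases Z)
  define d1 d2 where "d1 = z1 - f1" and "d2 = z2 - f2"
  have n: "d1^2 + d2^2 \<noteq> 0" using assms f z d1_def d2_def
    by (auto simp: sum_power2_eq_zero_iff)
  show ?thesis unfolding collinear_def
  proof (intro exI[of _ "(-d2, d1)"] ballI)
    fix x y assume xy: "x \<in> radical_axis f 1 Z R" "y \<in> radical_axis f 1 Z R"
    obtain x1 x2 where x: "x = (x1,x2)" by (cases x)
    obtain y1 y2 where y: "y = (y1,y2)" by (cases y)
    have "(x1-f1)^2+(x2-f2)^2 - 1 = (x1-z1)^2+(x2-z2)^2 - R^2"
         "(y1-f1)^2+(y2-f2)^2 - 1 = (y1-z1)^2+(y2-z2)^2 - R^2"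
      using xy unfolding radical_axis_def f z x y by (simp_all add: normsq)
    then have e: "d1*(x1-y1) + d2*(x2-y2) = 0" unfolding d1_def d2_def
      by (simp add: power2_eq_square algebra_simps)
    define k where "k = (d1*(x2-y2) - d2*(x1-y1)) / (d1^2+d2^2)"
    have b1: "(x1-y1)*(d1^2+d2^2) - (d1*(x2-y2) - d2*(x1-y1))*(-d2) = d1*(d1*(x1-y1) + d2*(x2-y2))"
      by (simp add: power2_eq_square algebra_simps)
    have b2: "(x2-y2)*(d1^2+d2^2) - (d1*(x2-y2) - d2*(x1-y1))*d1 = d2*(d1*(x1-y1) + d2*(x2-y2))"
      by (simp add: power2_eq_square algebra_simps)
    have a1: "x1 - y1 = k * (-d2)" unfolding k_def using n e b1
      by (simp add: field_simps)
    have a2: "x2 - y2 = k * d1" unfolding k_def using n e b2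
      by (simp add: field_simps)
    have "x - y = k *\<^sub>R (-d2, d1)"
      using a1 a2 x y by simp
    then show "\<exists>c. x - y = c *\<^sub>R (-d2, d1)" by blast
  qed
qed


locale geo =
  fixes a b c s r u g1 g2 w D :: real
  assumes cc: "c^2 = a^2-b^2" and ss: "s^2 = 1-u^2" and rr: "r^2 = a^2*(a^2-2*b^2) - c^4*u^2"
    and pos: "a>0" "b>0" "c>0" "s>0"
    and g1: "g1 = r* s - b^2*u" and g2: "g2 = r* s + b^2*u"
    and DD: "D = a^2 + (u^2-2)*c^2" "D \<noteq> 0" and ww: "w = a^2 - c^2*u^2"
begin

lemma g12: "g1 * g2 = - D * (c^2* s^2+b^2)"
  using cc ss rr g1 g2 DD ww by algebra

lemma gnz: "g1 \<noteq> 0" "g2 \<noteq> 0"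
proof -
  have "c^2* s^2+b^2 > 0" using pos by (simp add: add_nonneg_pos)
  then have "g1*g2 \<noteq> 0" using g12 DD by simp
  then show "g1 \<noteq> 0" "g2 \<noteq> 0" by auto
qed

lemma nz: "a \<noteq> 0" "b \<noteq> 0" "c \<noteq> 0" "s \<noteq> 0" using pos by auto

lemma t_Q1a: "(-(a*w/g1), b*(r+c^2*u* s)/g1) \<in> tangent_line a b (a*u, b* s)"
  using nz gnz unfolding tangent_line_def apply (simp add: field_simps)
  using cc ss rr g1 g2 ww by algebra
lemma t_Q1b: "(-(a*w/g1), b*(r+c^2*u* s)/g1) \<in> tangent_line a b (-(a*r)/(c^2* s), -(b^3)/(c^2* s))"
  using nz gnz unfolding tangent_line_def apply (simp add: field_simps)
  using cc ss rr g1 g2 ww by algebra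
lemma t_Q2a: "(-(a*w/g2), b*(r-c^2*u* s)/g2) \<in> tangent_line a b (-(a*r)/(c^2* s), -(b^3)/(c^2* s))"
  using nz gnz unfolding tangent_line_def apply (simp add: field_simps)
  using cc ss rr g1 g2 ww by algebra
lemma t_Q2b: "(-(a*w/g2), b*(r-c^2*u* s)/g2) \<in> tangent_line a b (-a*u, b* s)"
  using nz gnz unfolding tangent_line_def apply (simp add: field_simps)
  using cc ss rr g1 g2 ww by algebra
lemma t_Q3a: "(a*w/g1, b*(r+c^2*u* s)/g1) \<in> tangent_line a b (-a*u, b* s)"
  using nz gnz unfolding tangent_line_def apply (simp add: field_simps)
  using cc ss rr g1 g2 ww by algebra
lemma t_Q3b: "(a*w/g1, b*(r+c^2*u* s)/g1) \<in> tangent_line a b ((a*r)/(c^2* s), -(b^3)/(c^2* s))"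
  using nz gnz unfolding tangent_line_def apply (simp add: field_simps)
  using cc ss rr g1 g2 ww by algebra
lemma t_Q4a: "(a*w/g2, b*(r-c^2*u* s)/g2) \<in> tangent_line a b ((a*r)/(c^2* s), -(b^3)/(c^2* s))"
  using nz gnz unfolding tangent_line_def apply (simp add: field_simps)
  using cc ss rr g1 g2 ww by algebra
lemma t_Q4b: "(a*w/g2, b*(r-c^2*u* s)/g2) \<in> tangent_line a b (a*u, b* s)"
  using nz gnz unfolding tangent_line_def apply (simp add: field_simps)
  using cc ss rr g1 g2 ww by algebra


lemma fC: "c^2 + ((c^2*u^2 - a^2 + 2*b^2)/(2*b * s))^2 = ((a^2 - c^2*u^2)/(2*b * s))^2"
  using nz unfolding power_divide apply (simp add: field_simps)
  using cc ss by algebra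
lemma P1C: "(a*u)^2 + (b * s - (c^2*u^2 - a^2 + 2*b^2)/(2*b * s))^2 = ((a^2 - c^2*u^2)/(2*b * s))^2"
  using nz unfolding power_divide apply (simp add: field_simps)
  using cc ss by algebra
lemma P2C: "((a*r)/(c^2 * s))^2 + (-(b^3)/(c^2 * s) - (c^2*u^2 - a^2 + 2*b^2)/(2*b * s))^2 = ((a^2 - c^2*u^2)/(2*b * s))^2"
  using nz unfolding power_divide apply (simp add: field_simps)
  using cc ss rr by algebra
lemma fC': "c^2 + (-(2*b*c^2 * s)/D)^2 = (c*(c^2*u^2 - a^2)/D)^2"
  using nz DD unfolding power_divide apply (simp add: field_simps)
  using cc ss DD by algebra
lemma Q1C': "(a*w/g1)^2 + (b*(r+c^2*u * s)/g1 - (-(2*b*c^2 * s)/D))^2 = (c*(c^2*u^2 - a^2)/D)^2"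
  using nz DD gnz unfolding power_divide apply (simp add: field_simps)
  using cc ss rr g1 DD ww by algebra
lemma Q2C': "(a*w/g2)^2 + (b*(r-c^2*u * s)/g2 - (-(2*b*c^2 * s)/D))^2 = (c*(c^2*u^2 - a^2)/D)^2"
  using nz DD gnz unfolding power_divide apply (simp add: field_simps)
  using cc ss rr g2 DD ww by algebra

lemma d12: "(a*u)*(-(b^3)/(c^2 * s)) - (b * s)*(-(a*r)/(c^2 * s)) \<noteq> 0"
proof -
  have "(a*u)*(-(b^3)/(c^2 * s)) - (b * s)*(-(a*r)/(c^2 * s)) = a*b*g1/(c^2 * s)"
    using nz apply (simp add: field_simps) using g1 ss by algebra
  then show ?thesis using nz gnz by simp
qed
lemma d23: "(-(a*r)/(c^2 * s))*(b * s) - (-(b^3)/(c^2 * s))*(-a*u) \<noteq> 0"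
proof -
  have "(-(a*r)/(c^2 * s))*(b * s) - (-(b^3)/(c^2 * s))*(-a*u) = -a*b*g2/(c^2 * s)"
    using nz apply (simp add: field_simps) using g2 ss by algebra
  then show ?thesis using nz gnz by simp
qed
lemma d34: "(-a*u)*(-(b^3)/(c^2 * s)) - (b * s)*((a*r)/(c^2 * s)) \<noteq> 0"
proof -
  have "(-a*u)*(-(b^3)/(c^2 * s)) - (b * s)*((a*r)/(c^2 * s)) = -a*b*g1/(c^2 * s)"
    using nz apply (simp add: field_simps) using g1 ss by algebra
  then show ?thesis using nz gnz by simp
qed
lemma d41: "((a*r)/(c^2 * s))*(b * s) - (-(b^3)/(c^2 * s))*(a*u) \<noteq> 0"
proof -
  have "((a*r)/(c^2 * s))*(b * s) - (-(b^3)/(c^2 * s))*(a*u) = a*b*g2/(c^2 * s)"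
    using nz apply (simp add: field_simps) using g2 ss by algebra
  then show ?thesis using nz gnz by simp
qed
lemma cu_lt: "c^2*u^2 < a^2"
proof -
  have "c^2*u^2 = c^2*(1 - s^2)" using ss by simp
  then have "c^2*u^2 = c^2 - c^2 * s^2" by (simp add: right_diff_distrib)
  moreover have "c^2 * s^2 \<ge> 0" by simp
  moreover have "c^2 < a^2" using cc pos by simp
  ultimately show ?thesis by linarith
qed
lemma f_notin1: "(-c, 0) \<notin> tangent_line a b (a*u, b * s)"
proof
  assume "(-c, 0) \<in> tangent_line a b (a*u, b * s)"
  then have "-c*(a*u)/a^2 = 1" unfolding tangent_line_def by simp
  then have "c*u = -a" using nz by (simp add: field_simps power2_eq_square)
  then have "(c*u)^2 = a^2" by simp
  then show False using cu_lt by (simp add: power_mult_distrib)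
qed
lemma f_notin3: "(-c, 0) \<notin> tangent_line a b (-a*u, b * s)"
proof
  assume "(-c, 0) \<in> tangent_line a b (-a*u, b * s)"
  then have "c*(a*u) = a^2" unfolding tangent_line_def using nz by (auto simp: field_simps)
  then have "a*(c*u) = a*a" by (simp add: power2_eq_square algebra_simps)
  then have "c*u = a" using nz by simp
  then have "(c*u)^2 = a^2" by simp
  then show False using cu_lt by (simp add: power_mult_distrib)
qed

lemma tm:
  assumes "a \<noteq> 0" "b \<noteq> 0" "p1 * q2 - p2 * q1 \<noteq> 0"
    "X \<in> tangent_line a b (p1,p2)" "X \<in> tangent_line a b (q1,q2)"
  shows "tangent_meet a b (p1,p2) (q1,q2) = X"
  unfolding tangent_meet_def
proof (rule the_equality)
  show "X \<in> tangent_line a b (p1,p2) \<and> X \<in> tangent_line a b (q1,q2)" using assms by simp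
  fix Y assume Y: "Y \<in> tangent_line a b (p1,p2) \<and> Y \<in> tangent_line a b (q1,q2)"
  obtain x1 x2 where x: "X = (x1,x2)" by (cases X)
  obtain y1 y2 where y: "Y = (y1,y2)" by (cases Y)
  define e1 where "e1 = (y1-x1)/a^2"
  define e2 where "e2 = (y2-x2)/b^2"
  have hx: "x1*p1/a^2 + x2*p2/b^2 = 1" "x1*q1/a^2 + x2*q2/b^2 = 1"
    using assms(4,5) x unfolding tangent_line_def by auto
  have hy: "y1*p1/a^2 + y2*p2/b^2 = 1" "y1*q1/a^2 + y2*q2/b^2 = 1"
    using Y y unfolding tangent_line_def by auto
  have h1: "p1*e1 + p2*e2 = 0"
  proof -
    have "p1*e1 + p2*e2 = (y1*p1/a^2 + y2*p2/b^2) - (x1*p1/a^2 + x2*p2/b^2)"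
      unfolding e1_def e2_def by (simp add: diff_divide_distrib algebra_simps)
    then show ?thesis using hx hy by simp
  qed
  have h2: "q1*e1 + q2*e2 = 0"
  proof -
    have "q1*e1 + q2*e2 = (y1*q1/a^2 + y2*q2/b^2) - (x1*q1/a^2 + x2*q2/b^2)"
      unfolding e1_def e2_def by (simp add: diff_divide_distrib algebra_simps)
    then show ?thesis using hx hy by simp
  qed
  have "e1*(p1 * q2 - p2 * q1) = q2*(p1*e1 + p2*e2) - p2*(q1*e1 + q2*e2)" by (simp add: algebra_simps)
  then have "e1 = 0" using h1 h2 assms(3) by simp
  have "e2*(p1 * q2 - p2 * q1) = p1*(q1*e1 + q2*e2) - q1*(p1*e1 + p2*e2)" by (simp add: algebra_simps)
  then have "e2 = 0" using h1 h2 assms(3) by simp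
  show "Y = X" using \<open>e1 = 0\<close> \<open>e2 = 0\<close> assms(1,2) unfolding e1_def e2_def x y by simp
qed
end



theorem mainTheorem6:
  fixes a b u :: real
  assumes "a > b" "b > 0" "a / b > sqrt 2"
    and "\<bar>u\<bar> < u_max a b"
    and "a^2 + (u^2 - 2) * (focal_c a b)^2 \<noteq> 0"
  shows
    "(let f1 = (- focal_c a b, 0 :: real);
          inv = inversion f1 1;
          P = [P1 a b u, P2 a b u, P3 a b u, P4 a b u];
          Q = [tangent_meet a b (P1 a b u) (P2 a b u), tangent_meet a b (P2 a b u) (P3 a b u),
               tangent_meet a b (P3 a b u) (P4 a b u), tangent_meet a b (P4 a b u) (P1 a b u)]
      in collinear (inv ` set P)
         \<and> inv ` set P \<subseteq> radical_axis f1 1 (circC_center a b u) (circC_radius a b u)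
         \<and> collinear (inv ` set Q)
         \<and> inv ` set Q \<subseteq> radical_axis f1 1 (circC'_center a b u) (circC'_radius a b u))"
proof -
  define c where "c = focal_c a b"
  have ba: "b^2 < a^2" using assms(1,2) by (simp add: power_strict_mono)
  have c2: "c^2 = a^2 - b^2" using ba by (simp add: c_def focal_c_def)
  have cpos: "c > 0" using ba by (simp add: c_def focal_c_def)
  have apos: "a > 0" using assms(1,2) by simp
  have "sqrt 2 * b < a" using assms(2,3) by (simp add: pos_less_divide_eq)
  then have "(sqrt 2 * b)^2 < a^2" using assms(2) by (intro power_strict_mono) auto
  then have ab2: "2*b^2 < a^2" by (simp add: power_mult_distrib)
  have um: "\<bar>u\<bar> < a / c^2 * sqrt(a^2-2*b^2)" using assms(4) by (simp add: u_max_def c_def)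
  have "\<bar>u\<bar> * c^2 / a < sqrt(a^2-2*b^2)"
  proof -
    have "\<bar>u\<bar> * c^2 < a * sqrt(a^2-2*b^2)" using um cpos by (simp add: field_simps)
    then show ?thesis using apos by (simp add: field_simps)
  qed
  then have "(\<bar>u\<bar> * c^2 / a)^2 < (sqrt(a^2-2*b^2))^2"
    using apos by (intro power_strict_mono) (auto intro!: divide_nonneg_pos)
  then have "(\<bar>u\<bar> * c^2 / a)^2 < a^2-2*b^2" using ab2 by simp
  then have "u^2 * c^4 / a^2 < a^2-2*b^2" by (simp add: power_divide power_mult_distrib power2_abs flip: power_mult)
  then have cu: "c^4*u^2 < a^2*(a^2-2*b^2)" using apos by (simp add: field_simps)
  define r where "r = sqrt(a^2*(a^2-2*b^2) - c^4*u^2)"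
  have rr: "r^2 = a^2*(a^2-2*b^2) - c^4*u^2" using cu by (simp add: r_def)
  have "a^2*(a^2-2*b^2) = (c^2)^2 - b^4" using c2 by algebra
  moreover have "b^4 > 0" using assms(2) by simp
  ultimately have "c^4*u^2 < c^4 - b^4" using cu by (simp add: power_mult[symmetric])
  then have "c^4*u^2 < c^4" using \<open>b^4 > 0\<close> by linarith
  then have u1: "u^2 < 1" using cpos by simp
  define s where "s = sqrt(1-u^2)"
  have ss: "s^2 = 1-u^2" using u1 by (simp add: s_def)
  have spos: "s > 0" using u1 by (simp add: s_def)
  define D where "D = a^2 + (u^2-2)*c^2"
  have Dnz: "D \<noteq> 0" using assms(5) by (simp add: D_def c_def)
  define w where "w = a^2 - c^2*u^2"
  define g1 where "g1 = r * s - b^2*u"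
  define g2 where "g2 = r * s + b^2*u"
  interpret G: geo a b c s r u g1 g2 w D
    by unfold_locales (use c2 ss rr apos assms(2) cpos spos g1_def g2_def D_def Dnz w_def in auto)
  have eP1: "P1 a b u = (a*u, b * s)" by (simp add: P1_def s_def)
  have eP3: "P3 a b u = (-a*u, b * s)" by (simp add: P3_def s_def)
  have eP2: "P2 a b u = (-(a*r)/(c^2 * s), -(b^3)/(c^2 * s))" by (simp add: P2_def Let_def c_def s_def r_def)
  have eP4: "P4 a b u = ((a*r)/(c^2 * s), -(b^3)/(c^2 * s))" by (simp add: P4_def Let_def c_def s_def r_def)
  have eCC: "circC_center a b u = (0, (c^2*u^2 - a^2 + 2*b^2)/(2*b * s))" by (simp add: circC_center_def Let_def c_def s_def)
  have eCR: "circC_radius a b u = (a^2 - c^2*u^2)/(2*b * s)" by (simp add: circC_radius_def Let_def c_def s_def)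
  have eDC: "circC'_center a b u = (0, -(2*b*c^2 * s)/D)" by (simp add: circC'_center_def Let_def c_def s_def D_def)
  have eDR: "circC'_radius a b u = \<bar>c*(c^2*u^2 - a^2)/D\<bar>" by (simp add: circC'_radius_def Let_def c_def D_def)
  have eQ1: "tangent_meet a b (P1 a b u) (P2 a b u) = (-(a*w/g1), b*(r+c^2*u * s)/g1)"
    unfolding eP1 eP2 using G.nz G.d12 G.t_Q1a G.t_Q1b by (intro G.tm) auto
  have eQ2: "tangent_meet a b (P2 a b u) (P3 a b u) = (-(a*w/g2), b*(r-c^2*u * s)/g2)"
    unfolding eP2 eP3 using G.nz G.d23 G.t_Q2a G.t_Q2b by (intro G.tm) auto
  have eQ3: "tangent_meet a b (P3 a b u) (P4 a b u) = (a*w/g1, b*(r+c^2*u * s)/g1)"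
    unfolding eP3 eP4 using G.nz G.d34 G.t_Q3a G.t_Q3b by (intro G.tm) auto
  have eQ4: "tangent_meet a b (P4 a b u) (P1 a b u) = (a*w/g2, b*(r-c^2*u * s)/g2)"
    unfolding eP4 eP1 using G.nz G.d41 G.t_Q4a G.t_Q4b by (intro G.tm) auto
  define f where "f = (-c, 0::real)"
  define ZC where "ZC = (0::real, (c^2*u^2 - a^2 + 2*b^2)/(2*b * s))"
  define RC where "RC = (a^2 - c^2*u^2)/(2*b * s)"
  define ZD where "ZD = (0::real, -(2*b*c^2 * s)/D)"
  define RD where "RD = \<bar>c*(c^2*u^2 - a^2)/D\<bar>"
  have fC: "norm (f - ZC)^2 = RC^2" using G.fC unfolding f_def ZC_def RC_def by (simp add: normsq)
  have RD2: "RD^2 = (c*(c^2*u^2 - a^2)/D)^2" unfolding RD_def by (rule power2_abs)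
  have fD: "norm (f - ZD)^2 = RD^2" using G.fC' unfolding f_def ZD_def RD2 by (simp add: normsq)
  have ZCf: "ZC \<noteq> f" using cpos unfolding f_def ZC_def by simp
  have ZDf: "ZD \<noteq> f" using cpos unfolding f_def ZD_def by simp
  have bs: "b * s \<noteq> 0" using G.nz by simp
  have b3: "-(b^3)/(c^2 * s) \<noteq> 0" using G.nz by simp
  have inP: "inversion f 1 ` set [P1 a b u, P2 a b u, P3 a b u, P4 a b u] \<subseteq> radical_axis f 1 ZC RC"
  proof -
    have "inversion f 1 (a*u, b * s) \<in> radical_axis f 1 ZC RC"
      using G.P1C bs by (intro inv_radical[OF fC]) (auto simp: normsq ZC_def RC_def f_def)
    moreover have "inversion f 1 (-a*u, b * s) \<in> radical_axis f 1 ZC RC"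
      using G.P1C bs by (intro inv_radical[OF fC]) (auto simp: normsq ZC_def RC_def f_def)
    moreover have "inversion f 1 (-(a*r)/(c^2 * s), -(b^3)/(c^2 * s)) \<in> radical_axis f 1 ZC RC"
      using G.P2C b3 by (intro inv_radical[OF fC]) (auto simp: normsq ZC_def RC_def f_def)
    moreover have "inversion f 1 ((a*r)/(c^2 * s), -(b^3)/(c^2 * s)) \<in> radical_axis f 1 ZC RC"
      using G.P2C b3 by (intro inv_radical[OF fC]) (auto simp: normsq ZC_def RC_def f_def)
    ultimately show ?thesis unfolding eP1 eP2 eP3 eP4 by simp
  qed
  have Qf1: "(-(a*w/g1), b*(r+c^2*u * s)/g1) \<noteq> f" using G.t_Q1a G.f_notin1 f_def by auto
  have Qf2: "(-(a*w/g2), b*(r-c^2*u * s)/g2) \<noteq> f" using G.t_Q2b G.f_notin3 f_def by auto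
  have Qf3: "(a*w/g1, b*(r+c^2*u * s)/g1) \<noteq> f" using G.t_Q3a G.f_notin3 f_def by auto
  have Qf4: "(a*w/g2, b*(r-c^2*u * s)/g2) \<noteq> f" using G.t_Q4b G.f_notin1 f_def by auto
  have inQ: "inversion f 1 ` set [tangent_meet a b (P1 a b u) (P2 a b u), tangent_meet a b (P2 a b u) (P3 a b u),
               tangent_meet a b (P3 a b u) (P4 a b u), tangent_meet a b (P4 a b u) (P1 a b u)] \<subseteq> radical_axis f 1 ZD RD"
  proof -
    have "inversion f 1 (-(a*w/g1), b*(r+c^2*u * s)/g1) \<in> radical_axis f 1 ZD RD"
      using G.Q1C' Qf1 by (intro inv_radical[OF fD]) (auto simp: normsq ZD_def RD2)
    moreover have "inversion f 1 (-(a*w/g2), b*(r-c^2*u * s)/g2) \<in> radical_axis f 1 ZD RD"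
      using G.Q2C' Qf2 by (intro inv_radical[OF fD]) (auto simp: normsq ZD_def RD2)
    moreover have "inversion f 1 (a*w/g1, b*(r+c^2*u * s)/g1) \<in> radical_axis f 1 ZD RD"
      using G.Q1C' Qf3 by (intro inv_radical[OF fD]) (auto simp: normsq ZD_def RD2)
    moreover have "inversion f 1 (a*w/g2, b*(r-c^2*u * s)/g2) \<in> radical_axis f 1 ZD RD"
      using G.Q2C' Qf4 by (intro inv_radical[OF fD]) (auto simp: normsq ZD_def RD2)
    ultimately show ?thesis unfolding eQ1 eQ2 eQ3 eQ4 by simp
  qed
  have cP: "collinear (inversion f 1 ` set [P1 a b u, P2 a b u, P3 a b u, P4 a b u])"
    using collinear_subset[OF collinear_radical[OF ZCf] inP] .
  have cQ: "collinear (inversion f 1 ` set [tangent_meet a b (P1 a b u) (P2 a b u), tangent_meet a b (P2 a b u) (P3 a b u),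
               tangent_meet a b (P3 a b u) (P4 a b u), tangent_meet a b (P4 a b u) (P1 a b u)])"
    using collinear_subset[OF collinear_radical[OF ZDf] inQ] .
  have ff: "(- focal_c a b, 0::real) = f" by (simp add: f_def c_def)
  show ?thesis unfolding Let_def ff
    using inP inQ cP cQ eCC eCR eDC eDR ZC_def RC_def ZD_def RD_def by simp
qed
end
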